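(* Let $b$ be a solvable board position on the 37-hole hexagon board $H_X$. Suppose $b$ is invariant under the $180^\circ$ rotation $(a,b)\mapsto(-a,-b)$, or invariant under at least one diagonal reflection. This covers exactly symmetry types 1, 2, 3, 5, 7, 8 of the hexagon board: - full hexagonal symmetry; - $60^\circ$ rotation; - $120^\circ$ rotation together with a diagonal reflection; - both an orthogonal and the perpendicular diagonal reflection; - $180^\circ$ rotation; - a single diagonal reflection. Then $b$ lies in position class A.
   Context: Use axial coordinates on the triangular lattice. The hexagon board is $H_X=\{(a,c)\in\mathbb{Z}^2: |a|\le3,\ |c|\le3,\ |a+c|\le3\}$, which has 37 holes. The lattice lines are the lines in the three directions $(1,0),(0,1),(1,-1)$. A board position is a subset of $H_X$ (the occupied holes). A jump: given $d\in\{\pm(1,0),\pm(0,1),\pm(1,-1)\}$ and $p$ with $p,p+d,p+2d\in H_X$, $p,p+d$ occupied and $p+2d$ empty, the jump removes the pegs at $p,p+d$ and places a peg at $p+2d$. A position is solvable if some sequence of jumps leads to exactly one peg. The symmetries of $H_X$ form the dihedral group of order 12 of the regular hexagon, about the centre $(0,0)$. A reflection is called orthogonal if its mirror line is parallel to a lattice line. It is called diagonal if its mirror line is perpendicular to a lattice line. Position class A. For $i\in\{0,1,2\}$ let $N_i$ be the number of pegs of $b$ at holes $(a,c)$ with $a-c\equiv i\pmod 3$. The position $b$ lies in position class A if $N_1+N_2$ is even and $N_0+N_2$ and $N_0+N_1$ are odd. This is the position class of a single peg at $(0,0)$. *)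

theory Defs
  imports Main
begin

type_synonym hole = "int \<times> int"
type_synonym position = "hole set"

definition HX :: "hole set" where
  "HX = {(a, c). \<bar>a\<bar> \<le> 3 \<and> \<bar>c\<bar> \<le> 3 \<and> \<bar>a + c\<bar> \<le> 3}"

definition jump_dirs :: "hole set" where
  "jump_dirs = {(1,0), (-1,0), (0,1), (0,-1), (1,-1), (-1,1)}"

definition hadd :: "hole \<Rightarrow> hole \<Rightarrow> hole" where
  "hadd p q = (fst p + fst q, snd p + snd q)"

definition jump :: "position \<Rightarrow> position \<Rightarrow> bool" where
  "jump b b' \<longleftrightarrow> (\<exists>d p. d \<in> jump_dirs \<and>
      p \<in> HX \<and> hadd p d \<in> HX \<and> hadd (hadd p d) d \<in> HX \<and>
      p \<in> b \<and> hadd p d \<in> b \<and> hadd (hadd p d) d \<notin> b \<and>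
      b' = insert (hadd (hadd p d) d) (b - {p, hadd p d}))"

definition solvable :: "position \<Rightarrow> bool" where
  "solvable b \<longleftrightarrow> (\<exists>b'. jump\<^sup>*\<^sup>* b b' \<and> card b' = 1)"

definition Ncount :: "position \<Rightarrow> int \<Rightarrow> nat" where
  "Ncount b i = card {(a, c) \<in> b. (a - c) mod 3 = i}"

definition class_A :: "position \<Rightarrow> bool" where
  "class_A b \<longleftrightarrow> even (Ncount b 1 + Ncount b 2) \<and> odd (Ncount b 0 + Ncount b 2)
                 \<and> odd (Ncount b 0 + Ncount b 1)"

text \<open>Axial coordinates: (a,c) is a*e1 + c*e2 with e1, e2 unit vectors at 60 degrees,
  so the lattice directions are e1, e2, e1-e2.  Rotation by 180 degrees about the centre:\<close>
definition rot180 :: "hole \<Rightarrow> hole" where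
  "rot180 = (\<lambda>(a, c). (-a, -c))"

text \<open>The three diagonal reflections (mirror perpendicular to a lattice line):
  mirror along e1+e2 (perpendicular to e1-e2): swaps e1 and e2;
  mirror along 2e1-e2 (perpendicular to e2);
  mirror along e1-2e2 (perpendicular to e1).\<close>
definition diag_reflections :: "(hole \<Rightarrow> hole) set" where
  "diag_reflections = {\<lambda>(a, c). (c, a), \<lambda>(a, c). (a, -a - c), \<lambda>(a, c). (-a - c, c)}"

end

theory Submission
  imports Defs
begin

definition col :: "hole \<Rightarrow> int" where "col p = (fst p - snd p) mod 3"

lemma Ncount_alt: "Ncount b i = card {p\<in>b. col p = i}"
  unfolding Ncount_def col_def by (rule arg_cong[where f=card]) auto

lemma col_range: "col p \<in> {0,1,2}"
  unfolding col_def by auto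

lemma dir_cols:
  assumes "d \<in> jump_dirs"
  shows "col p \<noteq> col (hadd p d) \<and> col p \<noteq> col (hadd (hadd p d) d) \<and> col (hadd p d) \<noteq> col (hadd (hadd p d) d)"
  using assms by (cases p) (auto simp: jump_dirs_def col_def hadd_def; presburger)

lemma flip_one:
  assumes fin: "finite b" and pb: "p \<in> b" and qb: "q \<in> b" and rb: "r \<notin> b"
    and d1: "col p \<noteq> col q" and d2: "col p \<noteq> col r" and d3: "col q \<noteq> col r"
    and i: "i \<in> {0,1,2}"
  shows "odd (card {x\<in>insert r (b-{p,q}). col x = i}) \<longleftrightarrow> even (card {x\<in>b. col x = i})"
proof -
  let ?S = "{x\<in>b. col x = i}"
  have fS: "finite ?S" using fin by simp
  have cov: "col p = i \<or> col q = i \<or> col r = i"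
    using col_range[of p] col_range[of q] col_range[of r] i d1 d2 d3 by auto
  show ?thesis
  proof (cases "col r = i")
    case True
    then have "{x\<in>insert r (b-{p,q}). col x = i} = insert r ?S" using d2 d3 by auto
    then show ?thesis using fS rb by simp
  next
    case False
    show ?thesis
    proof (cases "col p = i")
      case True
      then have e: "{x\<in>insert r (b-{p,q}). col x = i} = ?S - {p}" using d1 False by auto
      have "p \<in> ?S" using True pb by simp
      then have g: "card ?S > 0" using fS card_gt_0_iff by blast
      have c: "card (?S - {p}) = card ?S - 1" using fS \<open>p \<in> ?S\<close> by (simp add: card_Diff_singleton)
      show ?thesis unfolding e c using g by presburger
    next
      case F2: False
      then have T: "col q = i" using cov False by auto
      then have e: "{x\<in>insert r (b-{p,q}). col x = i} = ?S - {q}" using d1 False by auto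
      have "q \<in> ?S" using T qb by simp
      then have g: "card ?S > 0" using fS card_gt_0_iff by blast
      have c: "card (?S - {q}) = card ?S - 1" using fS \<open>q \<in> ?S\<close> by (simp add: card_Diff_singleton)
      show ?thesis unfolding e c using g by presburger
    qed
  qed
qed

lemma jump_step:
  assumes "jump b b'" "finite b" "i \<in> {0,1,2}"
  shows "finite b' \<and> (odd (Ncount b' i) \<longleftrightarrow> even (Ncount b i))"
proof -
  from assms(1) obtain d p where d: "d \<in> jump_dirs" and
    h: "p \<in> b" "hadd p d \<in> b" "hadd (hadd p d) d \<notin> b"
       "b' = insert (hadd (hadd p d) d) (b - {p, hadd p d})"
    unfolding jump_def by blast
  show ?thesis using flip_one[OF assms(2) h(1,2,3) _ _ _ assms(3)] dir_cols[OF d, of p] h(4) assms(2)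
    unfolding Ncount_alt by auto
qed

definition inv3 :: "position \<Rightarrow> bool \<times> bool \<times> bool" where
  "inv3 b = (even (Ncount b 1 + Ncount b 2), even (Ncount b 0 + Ncount b 2), even (Ncount b 0 + Ncount b 1))"

lemma jump_inv:
  assumes "jump b b'" "finite b"
  shows "finite b' \<and> inv3 b' = inv3 b"
  using jump_step[OF assms, of 0] jump_step[OF assms, of 1] jump_step[OF assms, of 2]
  unfolding inv3_def by auto

lemma star_inv:
  assumes "jump\<^sup>*\<^sup>* b b'" "finite b"
  shows "finite b' \<and> inv3 b' = inv3 b"
  using assms by (induction rule: rtranclp_induct) (auto dest: jump_inv)

lemma single_N: "Ncount {x} i = (if col x = i then 1 else 0)"
proof -
  have "{p\<in>{x}. col p = i} = (if col x = i then {x} else {})" by auto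
  then show ?thesis unfolding Ncount_alt by simp
qed

lemma sym_eq:
  assumes cs: "\<And>p. col (s p) = (- col p) mod 3" and inv: "\<And>p. s (s p) = p" and sb: "s ` b = b"
  shows "Ncount b 1 = Ncount b 2"
proof -
  have inj: "inj s" by (metis inv injI)
  have "{x\<in>b. col x = 2} = s ` {x\<in>b. col x = 1}"
  proof
    show "s ` {x\<in>b. col x = 1} \<subseteq> {x\<in>b. col x = 2}" using sb cs by auto
    show "{x\<in>b. col x = 2} \<subseteq> s ` {x\<in>b. col x = 1}"
    proof
      fix y assume y: "y \<in> {x\<in>b. col x = 2}"
      have "s y \<in> b" using y sb by blast
      moreover have "col (s y) = 1" using cs[of y] y by simp
      ultimately show "y \<in> s ` {x\<in>b. col x = 1}" using inv[of y] by (metis (mono_tags, lifting) image_eqI mem_Collect_eq)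
    qed
  qed
  then show ?thesis unfolding Ncount_alt using card_image[OF inj_on_subset[OF inj]] by simp
qed

theorem theorem3:
  fixes b :: position
  assumes "b \<subseteq> HX"
    and "solvable b"
    and "rot180 ` b = b \<or> (\<exists>\<sigma>\<in>diag_reflections. \<sigma> ` b = b)"
  shows "class_A b"
proof -
  have fHX: "finite HX"
  proof -
    have "HX \<subseteq> {-3..3} \<times> {-3..3}" unfolding HX_def by auto
    then show ?thesis by (rule finite_subset) simp
  qed
  have fin: "finite b" using assms(1) fHX finite_subset by blast
  have N12: "Ncount b 1 = Ncount b 2"
    using assms(3)
  proof
    assume "rot180 ` b = b"
    then show ?thesis by (rule sym_eq[rotated 2]) (auto simp: rot180_def col_def split: prod.splits; presburger)+
  next
    assume "\<exists>\<sigma>\<in>diag_reflections. \<sigma> ` b = b"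
    then obtain \<sigma> where s: "\<sigma> \<in> diag_reflections" "\<sigma> ` b = b" by blast
    show ?thesis using s(1) unfolding diag_reflections_def
      by (auto intro!: sym_eq[OF _ _ s(2)] simp: col_def split: prod.splits; presburger)
  qed
  from assms(2) obtain b' where b': "jump\<^sup>*\<^sup>* b b'" "card b' = 1" unfolding solvable_def by blast
  from b'(2) obtain x where x: "b' = {x}" using card_1_singletonE by blast
  have I: "inv3 {x} = inv3 b" using star_inv[OF b'(1) fin] x by simp
  have "col x = 0"
    using I N12 col_range[of x] unfolding inv3_def single_N by (auto split: if_splits)
  then have "inv3 {x} = (True, False, False)" unfolding inv3_def single_N by simp
  then show ?thesis using I unfolding inv3_def class_A_def by auto
qed

end
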